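(* Let $2\le r\le m\le n$, $k\ge1$, $R=F[t]$ and $M=R^n$. Let $\mathbf u_1,\dots,\mathbf u_m\in M$ have all components polynomials of degree at most $k-1$, written $\mathbf u_j=\sum_{l=0}^{k-1}\mathbf u_j^{(l)}t^l$ with $\mathbf u_j^{(l)}\in F^n$, and let $\overline{\mathbf u_j}$ denote the image of $\mathbf u_j$ in $M/t^kM$. Suppose that $\overline{\mathbf u_{j_1}}\wedge\dots\wedge\overline{\mathbf u_{j_r}}=0$ in $\bigwedge^r(M/t^kM)$ for all $1\le j_1<\dots<j_r\le m$, and that $\mathbf u_1^{(0)}\wedge\dots\wedge\mathbf u_{r-1}^{(0)}\neq0$. Then for all $1\le j_1<\dots<j_r<j_{r+1}\le m$, $$\mathbf u_{j_1}\wedge\dots\wedge\mathbf u_{j_r}\wedge\mathbf u_{j_{r+1}}\in t^{2k}\textstyle\bigwedge^{r+1}M.$$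
   Context: $F$ is an algebraically closed field; wedge products are taken over the relevant ring ($R$ for elements of $M$, $R/(t^k)$ for elements of $M/t^kM$). Here $r+1\le m$ is needed for the conclusion to be nonvacuous. *)

theory Defs
  imports "HOL-Computational_Algebra.Polynomial" "Jordan_Normal_Form.Determinant"
begin

text \<open>Coordinate of the wedge product v_1 ^ ... ^ v_r (vectors in R^n, R a commutative
ring) with respect to the standard basis element e_I (I a subset of the coordinate
indices, |I| = r, listed increasingly) of the free module of r-th exterior power.\<close>
definition wedge_coord :: "'a::comm_ring_1 vec list \<Rightarrow> nat set \<Rightarrow> 'a" where
  "wedge_coord vs I =
     det (mat (length vs) (length vs) (\<lambda>(i, j). vs ! j $ (sorted_list_of_set I ! i)))"

definition wedge_nonzero :: "nat \<Rightarrow> 'a::comm_ring_1 vec list \<Rightarrow> bool" where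
  "wedge_nonzero n vs \<longleftrightarrow>
     (\<exists>I. I \<subseteq> {0..<n} \<and> card I = length vs \<and> wedge_coord vs I \<noteq> 0)"

text \<open>The wedge product of vs (vectors in F[t]^n) lies in t^e times the exterior power.
For e = k this is exactly the vanishing of the wedge of the images in
the exterior power of (F[t]/(t^k))^n.\<close>
definition wedge_in_tpow :: "nat \<Rightarrow> nat \<Rightarrow> 'a::field poly vec list \<Rightarrow> bool" where
  "wedge_in_tpow n e vs \<longleftrightarrow>
     (\<forall>I. I \<subseteq> {0..<n} \<and> card I = length vs \<longrightarrow> [:0, 1:] ^ e dvd wedge_coord vs I)"

end

theory Submission
  imports Defs
begin


lemma card_shift:
  assumes "S \<subseteq> {0..<Suc N}" "i < Suc N"
  shows "card {i'. i' < N \<and> (if i' < i then i' else Suc i') \<in> S} = card (S - {i})"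
proof -
  let ?sh = "\<lambda>i'. if i' < i then i' else Suc i'"
  have inj: "inj_on ?sh {i'. i' < N \<and> ?sh i' \<in> S}" by (auto simp: inj_on_def split: if_splits)
  have "?sh ` {i'. i' < N \<and> ?sh i' \<in> S} = S - {i}"
  proof
    show "?sh ` {i'. i' < N \<and> ?sh i' \<in> S} \<subseteq> S - {i}" by auto
    show "S - {i} \<subseteq> ?sh ` {i'. i' < N \<and> ?sh i' \<in> S}"
    proof
      fix y assume y: "y \<in> S - {i}"
      show "y \<in> ?sh ` {i'. i' < N \<and> ?sh i' \<in> S}"
      proof (cases "y < i")
        case True thus ?thesis using y assms by (auto intro!: image_eqI[of _ _ y])
      next
        case False
        then have "y = ?sh (y - 1)" "y - 1 < N" using y assms by auto
        thus ?thesis using y by (auto intro!: image_eqI[of _ _ "y - 1"])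
      qed
    qed
  qed
  thus ?thesis using card_image[OF inj] by simp
qed

lemma fk:
  fixes A :: "'b::comm_ring_1 mat"
  assumes "A \<in> carrier_mat N N" "B \<subseteq> {0..<N}" "C \<subseteq> {0..<N}"
   "\<forall>i\<in>B. \<forall>j\<in>C. x dvd A $$ (i,j)" "card B + card C \<ge> N + e"
  shows "x ^ e dvd det A"
  using assms
proof (induction N arbitrary: A B C e)
  case 0
  then show ?case by auto
next
  case (Suc N)
  show ?case
  proof (cases "e = 0")
    case True thus ?thesis by simp
  next
    case False
    have fB: "finite B" using Suc.prems(2) finite_subset by blast
    have "card B \<le> Suc N" using Suc.prems(2) using card_mono[OF _ Suc.prems(2)] by simp
    hence "C \<noteq> {}" using Suc.prems(5) False by auto
    then obtain j where j: "j \<in> C" by auto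
    have jN: "j < Suc N" using j Suc.prems(3) by auto
    have det: "det A = (\<Sum>i<Suc N. A $$ (i,j) * cofactor A i j)"
      by (rule laplace_expansion_column[OF Suc.prems(1) jN])
    let ?shj = "\<lambda>j'. if j' < j then j' else Suc j'"
    define C' where "C' = {j'. j' < N \<and> ?shj j' \<in> C}"
    have fC: "finite C" using Suc.prems(3) finite_subset by blast
    have cC': "card C' + 1 = card C" unfolding C'_def
      using card_shift[OF Suc.prems(3) jN] j fC card_gt_0_iff[of C]
      by (simp add: card_Diff_singleton) (metis Suc_pred empty_iff)
    show ?thesis unfolding det
    proof (rule dvd_sum)
      fix i assume "i \<in> {..<Suc N}"
      hence iN: "i < Suc N" by auto
      let ?shi = "\<lambda>i'. if i' < i then i' else Suc i'"
      define B' where "B' = {i'. i' < N \<and> ?shi i' \<in> B}"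
      let ?A' = "mat_delete A i j"
      have A': "?A' \<in> carrier_mat N N" using Suc.prems(1) by (auto simp: mat_delete_def)
      have ent: "\<And>i' j'. i' < N \<Longrightarrow> j' < N \<Longrightarrow> ?A' $$ (i',j') = A $$ (?shi i', ?shj j')"
        using Suc.prems(1) by (auto simp: mat_delete_def)
      have dv: "\<forall>i'\<in>B'. \<forall>j'\<in>C'. x dvd ?A' $$ (i',j')"
        using Suc.prems(4) by (auto simp: B'_def C'_def ent)
      have cB': "card B' = card (B - {i})" unfolding B'_def
        using card_shift[OF Suc.prems(2) iN] .
      have sub: "B' \<subseteq> {0..<N}" "C' \<subseteq> {0..<N}" by (auto simp: B'_def C'_def)
      have cof: "cofactor A i j = (-1)^(i+j) * det ?A'" by (simp add: cofactor_def)
      show "x ^ e dvd A $$ (i,j) * cofactor A i j"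
      proof (cases "i \<in> B")
        case True
        have "card B' + 1 = card B" using cB' True fB card_gt_0_iff[of B]
          by (simp add: card_Diff_singleton) (metis Suc_pred empty_iff)
        hence "card B' + card C' \<ge> N + (e - 1)" using cC' Suc.prems(5) \<open>e \<noteq> 0\<close> by arith
        hence "x ^ (e - 1) dvd det ?A'" using Suc.IH[OF A' sub dv] by blast
        moreover have "x dvd A $$ (i,j)" using Suc.prems(4) True j by auto
        ultimately have "x * x ^ (e - 1) dvd A $$ (i,j) * det ?A'" by (metis mult_dvd_mono)
        moreover have "x * x ^ (e - 1) = x ^ e" using False by (metis power_eq_if)
        ultimately show ?thesis unfolding cof by (metis dvd_mult mult.left_commute)
      next
        case False
        hence "card B' = card B" using cB' by simp
        hence "card B' + card C' \<ge> N + e" using cC' Suc.prems(5) \<open>e \<noteq> 0\<close> by arith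
        hence "x ^ e dvd det ?A'" using Suc.IH[OF A' sub dv] by blast
        thus ?thesis unfolding cof by (simp add: dvd_mult)
      qed
    qed
  qed
qed



lemma det_rows_perm_dvd:
  fixes g :: "nat \<Rightarrow> nat \<Rightarrow> 'b::comm_ring_1"
  assumes inj: "inj_on f {0..<N}" and im: "f ` {0..<N} = S"
    and dv: "x dvd det (mat N N (\<lambda>(a,b). g b (sorted_list_of_set S ! a)))"
  shows "x dvd det (mat N N (\<lambda>(a,b). g b (f a)))"
proof -
  define L where "L = sorted_list_of_set S"
  have fS: "finite S" using im by auto
  have cS: "card S = N" using card_image[OF inj] im by simp
  have dL: "distinct L" and sL: "set L = S" and lL: "length L = N"
    using fS cS by (auto simp: L_def)
  have bL: "bij_betw ((!) L) {0..<N} S"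
    using bij_betw_nth[OF dL _ sL[symmetric], of "{0..<N}"] lL by (simp add: atLeast0LessThan)
  define p where "p a = (if a < N then the_inv_into {0..<N} ((!) L) (f a) else a)" for a
  have bf: "bij_betw f {0..<N} S" using inj im by (simp add: bij_betw_def)
  have bi: "bij_betw (the_inv_into {0..<N} ((!) L)) S {0..<N}" by (rule bij_betw_the_inv_into[OF bL])
  have "bij_betw (the_inv_into {0..<N} ((!) L) \<circ> f) {0..<N} {0..<N}"
    by (rule bij_betw_trans[OF bf bi])
  hence bp: "bij_betw p {0..<N} {0..<N}"
    by (rule bij_betw_cong[THEN iffD1, rotated]) (auto simp: p_def)
  have pp: "p permutes {0..<N}"
    by (rule bij_imp_permutes[OF bp]) (auto simp: p_def)
  have Lp: "L ! (p a) = f a" if "a < N" for a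
    using that f_the_inv_into_f_bij_betw[OF bL, of "f a"] im by (auto simp: p_def)
  define A where "A = mat N N (\<lambda>(a,b). g b (L ! a))"
  have A: "A \<in> carrier_mat N N" by (simp add: A_def)
  have pN: "a < N \<Longrightarrow> p a < N" for a using bp by (auto simp: bij_betw_def)
  have eq: "mat N N (\<lambda>(a,b). g b (f a)) = mat N N (\<lambda>(a,b). A $$ (p a, b))"
    by (rule eq_matI) (auto simp: A_def Lp pN)
  show ?thesis unfolding eq det_permute_rows[OF A pp]
    using dv by (simp add: A_def L_def)
qed



lemma schur_last:
  fixes A :: "'b::idom mat"
  assumes A: "A \<in> carrier_mat q q" and bv: "bv \<in> carrier_mat q 1"
    and cr: "cr \<in> carrier_mat 1 q" and d: "d \<in> carrier_mat 1 1" and D: "det A \<noteq> 0"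
  shows "det (four_block_mat A bv cr d) = (d * (det A \<cdot>\<^sub>m 1\<^sub>m 1) - cr * (adj_mat A * bv)) $$ (0,0)"
proof -
  let ?D = "det A"
  have adj: "adj_mat A \<in> carrier_mat q q" "A * adj_mat A = ?D \<cdot>\<^sub>m 1\<^sub>m q" using adj_mat[OF A] by auto
  define Bv where "Bv = adj_mat A * bv"
  have Bv: "Bv \<in> carrier_mat q 1" using adj bv by (simp add: Bv_def)
  define K where "K = four_block_mat (1\<^sub>m q) (- Bv) (0\<^sub>m 1 q) (?D \<cdot>\<^sub>m 1\<^sub>m 1)"
  define W where "W = d * (?D \<cdot>\<^sub>m 1\<^sub>m 1) - cr * Bv"
  have W: "W \<in> carrier_mat 1 1" using d cr Bv unfolding W_def by (intro minus_carrier_mat mult_carrier_mat)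
  have tr: "A * (- Bv) + bv * (?D \<cdot>\<^sub>m 1\<^sub>m 1) = 0\<^sub>m q 1"
  proof -
    have e1: "A * Bv = (A * adj_mat A) * bv" unfolding Bv_def
      using assoc_mult_mat[OF A adj(1) bv] by simp
    have "A * (- Bv) = - ((A * adj_mat A) * bv)" using uminus_mult_right_mat[of A Bv] A Bv e1 by simp
    also have "\<dots> = - (?D \<cdot>\<^sub>m bv)" using adj bv mult_smult_assoc_mat[OF one_carrier_mat bv, of "det A"] by simp
    finally show ?thesis using bv by (auto simp: mult_smult_distrib)
  qed
  have tr': "- (A * Bv) + bv * (?D \<cdot>\<^sub>m 1\<^sub>m 1) = 0\<^sub>m q 1"
    using tr uminus_mult_right_mat[of A Bv] A Bv by simp
  have w': "- (cr * Bv) + d * (?D \<cdot>\<^sub>m 1\<^sub>m 1) = W"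
    unfolding W_def by (rule eq_matI) (insert cr Bv d, auto)
  have prod: "four_block_mat A bv cr d * K = four_block_mat A (0\<^sub>m q 1) cr W"
    unfolding K_def
    apply (subst mult_four_block_mat[OF A bv cr d])
    using Bv apply (auto)[4]
    apply (rule cong_four_block_mat)
    using A bv apply simp
    apply (rule tr)
    using cr d apply simp
    using w' cr Bv by simp
  have "det (four_block_mat A bv cr d * K) = det (four_block_mat A bv cr d) * det K"
    by (rule det_mult[of _ "q+1"], insert A bv cr d, auto simp: K_def)
  moreover have "det K = ?D"
    unfolding K_def by (subst det_four_block_mat_lower_left_zero[of _ q _ 1], insert Bv, auto)
  moreover have "det (four_block_mat A (0\<^sub>m q 1) cr W) = ?D * W $$ (0,0)"
    by (subst det_four_block_mat_upper_right_zero[OF A refl cr W]) (simp add: det_single[OF W])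
  ultimately show ?thesis using D prod by (simp add: W_def Bv_def)
qed



lemma main_block:
  fixes A :: "'b::idom mat"
  assumes XI: "XI \<in> carrier_mat p p" and UI: "UI \<in> carrier_mat p q"
    and A: "A \<in> carrier_mat q q" and X0: "X0 \<in> carrier_mat q p"
    and dv: "\<forall>a<p. \<forall>c<p. x dvd (det A \<cdot>\<^sub>m XI - UI * (adj_mat A * X0)) $$ (a,c)"
    and pq: "q + 2 \<le> p"
  shows "x^2 dvd det XI * det A * det A ^ p"
proof -
  let ?D = "det A"
  have adj: "adj_mat A \<in> carrier_mat q q" using adj_mat[OF A] by auto
  define Bm where "Bm = adj_mat A * X0"
  have Bm: "Bm \<in> carrier_mat q p" using adj X0 by (simp add: Bm_def)
  define T where "T = four_block_mat XI UI (0\<^sub>m q p) A"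
  define K where "K = four_block_mat (?D \<cdot>\<^sub>m 1\<^sub>m p) (0\<^sub>m p q) (- Bm) (1\<^sub>m q)"
  have T: "T \<in> carrier_mat (p+q) (p+q)" using XI A by (simp add: T_def)
  have K: "K \<in> carrier_mat (p+q) (p+q)" by (simp add: K_def)
  have dT: "det T = det XI * ?D"
    unfolding T_def by (rule det_four_block_mat_lower_left_zero[OF _ UI refl A], rule XI)
  have dK: "det K = ?D ^ p"
    unfolding K_def by (subst det_four_block_mat_upper_right_zero[of _ p _ q], insert Bm, auto)
  have tl: "XI * (?D \<cdot>\<^sub>m 1\<^sub>m p) + UI * (- Bm) = ?D \<cdot>\<^sub>m XI - UI * Bm"
  proof -
    have "XI * (?D \<cdot>\<^sub>m 1\<^sub>m p) = ?D \<cdot>\<^sub>m XI" using mult_smult_distrib[OF XI one_carrier_mat] XI by simp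
    moreover have "UI * (- Bm) = - (UI * Bm)" using uminus_mult_right_mat[of UI Bm] UI Bm by simp
    ultimately show ?thesis using XI UI Bm by (simp, intro eq_matI, auto)
  qed
  have TK: "T * K = four_block_mat (XI * (?D \<cdot>\<^sub>m 1\<^sub>m p) + UI * (- Bm)) (XI * 0\<^sub>m p q + UI * 1\<^sub>m q)
     (0\<^sub>m q p * (?D \<cdot>\<^sub>m 1\<^sub>m p) + A * (- Bm)) (0\<^sub>m q p * 0\<^sub>m p q + A * 1\<^sub>m q)"
    unfolding T_def K_def by (rule mult_four_block_mat[OF XI UI _ A], insert Bm, auto)
  have ent: "(T * K) $$ (a,c) = (?D \<cdot>\<^sub>m XI - UI * (adj_mat A * X0)) $$ (a,c)" if "a < p" "c < p" for a c
  proof -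
    have "(T * K) $$ (a,c) = (XI * (?D \<cdot>\<^sub>m 1\<^sub>m p) + UI * (- Bm)) $$ (a,c)"
      unfolding TK using that XI UI Bm A by (subst index_mat_four_block) auto
    thus ?thesis using tl unfolding Bm_def by simp
  qed
  have "x ^ 2 dvd det (T * K)"
    by (rule fk[of _ "p+q" "{0..<p}" "{0..<p}"], insert T K dv ent pq, auto)
  moreover have "det (T * K) = det T * det K" by (rule det_mult[OF T K])
  ultimately show ?thesis using dT dK by simp
qed


lemma cop_cancel:
  fixes D y :: "'a::field poly"
  assumes "poly D 0 \<noteq> 0" "[:0,1:]^N dvd D^e * y"
  shows "[:0,1:]^N dvd y"
  using assms(2)
proof (induction N arbitrary: y)
  case 0 thus ?case by simp
next
  case (Suc N)
  have "[:0,1:] dvd D^e * y" using Suc.prems by (metis dvd_mult_left power_Suc)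
  hence "poly (D^e * y) 0 = 0" using dvd_iff_poly_eq_0[of 0 "D^e * y"] by simp
  hence "poly y 0 = 0" using assms(1) by (simp add: poly_power)
  then obtain y' where y: "y = [:0,1:] * y'" using dvd_iff_poly_eq_0[of 0 y] by (auto elim: dvdE)
  have "[:0,1:] * [:0,1:]^N dvd [:0,1:] * (D^e * y')" using Suc.prems unfolding y by (simp add: ac_simps)
  hence "[:0,1:]^N dvd D^e * y'" by (subst (asm) dvd_mult_cancel_left) simp
  hence "[:0,1:]^N dvd y'" by (rule Suc.IH)
  thus ?case unfolding y power_Suc by (rule mult_dvd_mono[OF dvd_refl])
qed



theorem theorem4p3:
  fixes u :: "nat \<Rightarrow> 'a::alg_closed_field poly vec"
    and n m r k :: nat
  assumes "2 \<le> r" and "r \<le> m" and "m \<le> n" and "1 \<le> k"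
    and dim: "\<And>j. j \<in> {1..m} \<Longrightarrow> dim_vec (u j) = n"
    and deg: "\<And>j i. j \<in> {1..m} \<Longrightarrow> i < n \<Longrightarrow> degree (u j $ i) \<le> k - 1"
    and vanish: "\<And>js. sorted_wrt (<) js \<Longrightarrow> set js \<subseteq> {1..m} \<Longrightarrow> length js = r \<Longrightarrow>
                   wedge_in_tpow n k (map u js)"
    and nondeg: "wedge_nonzero n (map (\<lambda>j. map_vec (\<lambda>p. coeff p 0) (u j)) [1..<r])"
  shows "\<forall>js. sorted_wrt (<) js \<and> set js \<subseteq> {1..m} \<and> length js = r + 1 \<longrightarrow>
           wedge_in_tpow n (2 * k) (map u js)"
proof -
  define q where "q = r - 1"
  have rq: "r = q + 1" using assms(1) by (simp add: q_def)
  obtain I0 where I0: "I0 \<subseteq> {0..<n}" "card I0 = q"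
    and nz: "wedge_coord (map (\<lambda>j. map_vec (\<lambda>p. coeff p 0) (u j)) [1..<r]) I0 \<noteq> 0"
    using nondeg unfolding wedge_nonzero_def by (auto simp: q_def)
  define \<rho>0 where "\<rho>0 a = sorted_list_of_set I0 ! a" for a
  have fI0: "finite I0" using I0(1) finite_subset by blast
  have \<rho>0I: "a < q \<Longrightarrow> \<rho>0 a \<in> I0" for a
    unfolding \<rho>0_def using fI0 I0(2) by (metis nth_mem length_sorted_list_of_set set_sorted_list_of_set)
  have \<rho>0n: "\<rho>0 a < n" if "a < q" for a using \<rho>0I[OF that] I0(1) by auto
  define A where "A = mat q q (\<lambda>(a,b). u (b+1) $ \<rho>0 a)"
  have A: "A \<in> carrier_mat q q" by (simp add: A_def)
  define D where "D = det A"
  have D0: "poly D 0 \<noteq> 0"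
  proof -
    interpret h: comm_ring_hom "\<lambda>p::'a poly. poly p 0" by (unfold_locales, auto)
    have "mat q q (\<lambda>(i,j). map (\<lambda>j. map_vec (\<lambda>p. coeff p 0) (u j)) [1..<r] ! j $ (sorted_list_of_set I0 ! i))
       = map_mat (\<lambda>p. poly p 0) A"
    proof (rule eq_matI)
      fix i j assume ij: "i < dim_row (map_mat (\<lambda>p. poly p 0) A)" "j < dim_col (map_mat (\<lambda>p. poly p 0) A)"
      hence ij': "i < q" "j < q" by (auto simp: A_def)
      have mj: "map (\<lambda>j. map_vec (\<lambda>p. coeff p 0) (u j)) [Suc 0..<r] ! j = map_vec (\<lambda>p. coeff p 0) (u (Suc j))"
        using ij' by (simp add: q_def)
      have dj: "dim_vec (u (Suc j)) = n" using ij' assms(2) by (intro dim) (auto simp: q_def)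
      show "mat q q (\<lambda>(i,j). map (\<lambda>j. map_vec (\<lambda>p. coeff p 0) (u j)) [1..<r] ! j $ (sorted_list_of_set I0 ! i)) $$ (i,j)
        = map_mat (\<lambda>p. poly p 0) A $$ (i,j)"
        using ij' \<rho>0n[of i] dj by (simp add: mj A_def \<rho>0_def[symmetric] poly_0_coeff_0)
    qed (auto simp: A_def)
    hence "det (map_mat (\<lambda>p. poly p 0) A) \<noteq> 0" using nz unfolding wedge_coord_def by (simp add: q_def)
    thus ?thesis unfolding D_def by simp
  qed
  hence Dnz: "D \<noteq> 0" by auto
  define crow where "crow i = mat 1 q (\<lambda>(_,l). u (l+1) $ i)" for i
  define bvec where "bvec v = mat q 1 (\<lambda>(a,_). v $ \<rho>0 a)" for v :: "'a poly vec"
  define dm where "dm v i = mat 1 1 (\<lambda>_. v $ i)" for v :: "'a poly vec" and i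
  define wv where "wv v i = (dm v i * (D \<cdot>\<^sub>m 1\<^sub>m 1) - crow i * (adj_mat A * bvec v)) $$ (0,0)" for v i
  have sI0: "set (sorted_list_of_set I0) = I0" "length (sorted_list_of_set I0) = q" "distinct (sorted_list_of_set I0)"
    using fI0 I0(2) by auto
  have \<rho>0inj: "a < q \<Longrightarrow> b < q \<Longrightarrow> \<rho>0 a = \<rho>0 b \<Longrightarrow> a = b" for a b
    unfolding \<rho>0_def using sI0 nth_eq_iff_index_eq by metis
  have \<rho>0im: "\<rho>0 ` {0..<q} = I0"
    unfolding \<rho>0_def using sI0 by (metis atLeast0LessThan image_set map_nth set_map set_upt)
  have claim1: "[:0,1:]^k dvd wv (u j) i" if j: "j \<in> {1..m}" and i: "i < n" for j i
  proof -
    define colv where "colv b = (if b < q then u (b+1) else u j)" for b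
    define f where "f a = (if a < q then \<rho>0 a else i)" for a
    define Mf where "Mf = mat r r (\<lambda>(a,b). colv b $ f a)"
    have Mf: "Mf \<in> carrier_mat r r" by (simp add: Mf_def)
    have eqM: "four_block_mat A (bvec (u j)) (crow i) (dm (u j) i) = Mf"
      by (rule eq_matI) (auto simp: Mf_def A_def bvec_def crow_def dm_def colv_def f_def rq)
    have "det Mf = wv (u j) i"
      unfolding wv_def eqM[symmetric] D_def
      by (rule schur_last[OF A], insert Dnz, auto simp: bvec_def crow_def dm_def D_def)
    moreover have "[:0,1:]^k dvd det Mf"
    proof (cases "i \<in> I0")
      case True
      then obtain a0 where a0: "a0 < q" "\<rho>0 a0 = i" using \<rho>0im by auto
      have "det Mf = 0"
        by (rule det_identical_rows[OF Mf, of a0 q]) (insert a0, auto simp: Mf_def f_def rq)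
      thus ?thesis by simp
    next
      case False
      have inj: "inj_on f {0..<r}"
        unfolding inj_on_def f_def rq using False \<rho>0I \<rho>0inj by auto
      have im: "f ` {0..<r} = insert i I0"
      proof -
        have "{0..<r} = insert q {0..<q}" using rq by auto
        thus ?thesis using \<rho>0im by (auto simp: f_def)
      qed
      show ?thesis
      proof (cases "j < r")
        case True
        have "det Mf = 0"
          by (rule det_identical_columns[OF Mf, of "j - 1" q]) (insert True j rq, auto simp: Mf_def colv_def)
        thus ?thesis by simp
      next
        case jr: False
        define js where "js = [1..<r] @ [j]"
        have uq: "u q = u (Suc jj)" if "jj < q" "\<not> jj < q - Suc 0" for jj
        proof -
          have "Suc jj = q" using that by arith
          thus ?thesis by simp
        qed
        have "wedge_in_tpow n k (map u js)"
          by (rule vanish) (insert jr j assms(2), auto simp: js_def sorted_wrt_append rq)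
        moreover have "insert i I0 \<subseteq> {0..<n}" using i I0(1) by auto
        moreover have "card (insert i I0) = length (map u js)" using False fI0 I0(2) rq by (simp add: js_def)
        ultimately have "[:0,1:]^k dvd wedge_coord (map u js) (insert i I0)"
          unfolding wedge_in_tpow_def by blast
        moreover have "wedge_coord (map u js) (insert i I0) =
            det (mat r r (\<lambda>(a,b). colv b $ (sorted_list_of_set (insert i I0) ! a)))"
          unfolding wedge_coord_def
          by (rule arg_cong[of _ _ det], rule eq_matI) (auto simp: js_def colv_def rq nth_append uq)
        ultimately show ?thesis unfolding Mf_def
          using det_rows_perm_dvd[OF inj im, of _ "\<lambda>b x. colv b $ x"] by simp
      qed
    qed
    ultimately show ?thesis by simp
  qed
  have adjA: "adj_mat A \<in> carrier_mat q q" using adj_mat[OF A] by auto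
  show ?thesis
  proof (intro allI impI)
    fix js assume js: "sorted_wrt (<) js \<and> set js \<subseteq> {1..m} \<and> length js = r + 1"
    define p where "p = r + 1"
    have jsm: "js ! c \<in> {1..m}" if "c < p" for c
    proof -
      have "js ! c \<in> set js" using js that by (intro nth_mem) (simp add: p_def)
      thus ?thesis using js by blast
    qed
    show "wedge_in_tpow n (2*k) (map u js)" unfolding wedge_in_tpow_def
    proof (intro allI impI)
      fix I assume I: "I \<subseteq> {0..<n} \<and> card I = length (map u js)"
      define \<rho> where "\<rho> a = sorted_list_of_set I ! a" for a
      have fI: "finite I" using I finite_subset by blast
      have cI: "card I = p" using I js by (simp add: p_def)
      have \<rho>n: "\<rho> a < n" if "a < p" for a
      proof -
        have "\<rho> a \<in> I" unfolding \<rho>_def using fI cI that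
          by (metis nth_mem length_sorted_list_of_set set_sorted_list_of_set)
        thus ?thesis using I by auto
      qed
      define XI where "XI = mat p p (\<lambda>(a,c). u (js!c) $ \<rho> a)"
      define UI where "UI = mat p q (\<lambda>(a,l). u (l+1) $ \<rho> a)"
      define X0 where "X0 = mat q p (\<lambda>(a,c). u (js!c) $ \<rho>0 a)"
      have XI: "XI \<in> carrier_mat p p" and UI: "UI \<in> carrier_mat p q" and X0: "X0 \<in> carrier_mat q p"
        by (auto simp: XI_def UI_def X0_def)
      have wc: "wedge_coord (map u js) I = det XI"
        unfolding wedge_coord_def XI_def
        by (rule arg_cong[of _ _ det], rule eq_matI) (insert js, auto simp: p_def \<rho>_def)
      have dv: "\<forall>a<p. \<forall>c<p. [:0,1:]^k dvd (det A \<cdot>\<^sub>m XI - UI * (adj_mat A * X0)) $$ (a,c)"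
      proof (intro allI impI)
        fix a c assume ac: "a < p" "c < p"
        have "(det A \<cdot>\<^sub>m XI - UI * (adj_mat A * X0)) $$ (a,c) = wv (u (js!c)) (\<rho> a)"
          using ac adjA by (simp add: wv_def dm_def crow_def bvec_def XI_def UI_def X0_def D_def
              scalar_prod_def ac_simps)
        thus "[:0,1:]^k dvd (det A \<cdot>\<^sub>m XI - UI * (adj_mat A * X0)) $$ (a,c)"
          using claim1[OF jsm[OF ac(2)] \<rho>n[OF ac(1)]] by simp
      qed
      have "([:0,1:]^k)^2 dvd det XI * det A * det A ^ p"
        by (rule main_block[OF XI UI A X0 dv]) (use assms(1) in \<open>simp add: p_def q_def\<close>)
      moreover have "([:0,1:]^k)^2 = ([:0,1::'a:]^(2*k))"
        by (metis power_mult mult.commute)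
      moreover have "det XI * det A * det A ^ p = D ^ (p+1) * det XI"
        unfolding D_def by (simp add: algebra_simps)
      ultimately have "[:0,1:]^(2*k) dvd D ^ (p+1) * det XI" by simp
      thus "[:0,1:]^(2*k) dvd wedge_coord (map u js) I"
        unfolding wc by (rule cop_cancel[OF D0])
    qed
  qed
qed

end
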